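(* Let $\lvert\psi\rangle$ be an $n$-qubit state. Suppose the fidelity $\lvert\langle\psi|\phi\rangle\rvert^2$ is maximized by $\lvert\phi\rangle = \lvert0^n\rangle$ over stabilizer states $\lvert\phi\rangle$. Let $S^* = 0^n \times \mathbb F_2^n = \mathrm{Weyl}(\lvert0^n\rangle)$, and let $T = 0^{n + 1} \times \mathbb F_2^{n - 1}$ be a maximal subspace. Then \[\sum_{x \in S^* \setminus T}q_\psi(x) \geq \frac{2-\sqrt{3}}{2} F_\mathcal{S}(\lvert\psi\rangle)^4.\]
   Context: For $x=(a,b)\in\mathbb F_2^{2n}$ the Weyl operator is $W_x = i^{a\cdot b}X^{a_1}Z^{b_1}\otimes\cdots\otimes X^{a_n}Z^{b_n}$; $p_\psi(x)=2^{-n}\langle\psi|W_x|\psi\rangle^2$ and $q_\psi(x)=\sum_{y\in\mathbb F_2^{2n}}p_\psi(y)p_\psi(x+y)$ (the distribution produced by Bell difference sampling); $\mathrm{Weyl}(\lvert\phi\rangle)=\{x: W_x\lvert\phi\rangle=\pm\lvert\phi\rangle\}$; $F_\mathcal{S}(\lvert\psi\rangle)=\max_{\lvert\phi\rangle\text{ stabilizer}}\lvert\langle\phi|\psi\rangle\rvert^2$. *)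

theory Defs
  imports Complex_Main
begin

text \<open>Bit strings in F_2^n are functions nat => bool vanishing at indices >= n.
  Qubit k (1-based in the paper) is index k-1 here. An n-qubit state is a function
  from bit strings to complex amplitudes (only values on bitvecs n matter).\<close>

definition bitvecs :: "nat \<Rightarrow> (nat \<Rightarrow> bool) set" where
  "bitvecs n = {a. \<forall>i. n \<le> i \<longrightarrow> \<not> a i}"

definition xorv :: "(nat \<Rightarrow> bool) \<Rightarrow> (nat \<Rightarrow> bool) \<Rightarrow> (nat \<Rightarrow> bool)" where
  "xorv a b = (\<lambda>i. a i \<noteq> b i)"

definition zerov :: "nat \<Rightarrow> bool" where
  "zerov = (\<lambda>_. False)"

definition dotn :: "nat \<Rightarrow> (nat \<Rightarrow> bool) \<Rightarrow> (nat \<Rightarrow> bool) \<Rightarrow> nat" where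
  "dotn n a b = card {i. i < n \<and> a i \<and> b i}"

definition pts :: "nat \<Rightarrow> ((nat \<Rightarrow> bool) \<times> (nat \<Rightarrow> bool)) set" where
  "pts n = bitvecs n \<times> bitvecs n"

definition addp :: "(nat \<Rightarrow> bool) \<times> (nat \<Rightarrow> bool) \<Rightarrow> (nat \<Rightarrow> bool) \<times> (nat \<Rightarrow> bool)
    \<Rightarrow> (nat \<Rightarrow> bool) \<times> (nat \<Rightarrow> bool)" where
  "addp x y = (xorv (fst x) (fst y), xorv (snd x) (snd y))"

text \<open>Weyl operator W_(a,b) = i^(a.b) X^(a_1)Z^(b_1) (x) ... (x) X^(a_n)Z^(b_n) applied to psi:
  (X^a Z^b psi)(w) = (-1)^(b.(w+a)) psi(w+a).\<close>
definition weyl_op :: "nat \<Rightarrow> (nat \<Rightarrow> bool) \<times> (nat \<Rightarrow> bool) \<Rightarrow> ((nat \<Rightarrow> bool) \<Rightarrow> complex)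
    \<Rightarrow> ((nat \<Rightarrow> bool) \<Rightarrow> complex)" where
  "weyl_op n x psi = (\<lambda>w. \<i> ^ (dotn n (fst x) (snd x))
      * (-1) ^ (dotn n (snd x) (xorv w (fst x))) * psi (xorv w (fst x)))"

definition braket :: "nat \<Rightarrow> ((nat \<Rightarrow> bool) \<Rightarrow> complex) \<Rightarrow> ((nat \<Rightarrow> bool) \<Rightarrow> complex) \<Rightarrow> complex" where
  "braket n phi psi = (\<Sum>z\<in>bitvecs n. cnj (phi z) * psi z)"

definition is_state :: "nat \<Rightarrow> ((nat \<Rightarrow> bool) \<Rightarrow> complex) \<Rightarrow> bool" where
  "is_state n psi \<longleftrightarrow> braket n psi psi = 1"

definition Weyl :: "nat \<Rightarrow> ((nat \<Rightarrow> bool) \<Rightarrow> complex) \<Rightarrow> ((nat \<Rightarrow> bool) \<times> (nat \<Rightarrow> bool)) set" where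
  "Weyl n phi = {x \<in> pts n. (\<forall>w\<in>bitvecs n. weyl_op n x phi w = phi w)
                          \<or> (\<forall>w\<in>bitvecs n. weyl_op n x phi w = - phi w)}"

text \<open>Stabilizer state: a unit vector stabilized (up to sign) by 2^n Weyl operators,
  i.e. the unique (up to phase) joint eigenvector of a maximal stabilizer group.\<close>
definition is_stabilizer :: "nat \<Rightarrow> ((nat \<Rightarrow> bool) \<Rightarrow> complex) \<Rightarrow> bool" where
  "is_stabilizer n phi \<longleftrightarrow> is_state n phi \<and> card (Weyl n phi) = 2 ^ n"

text \<open>p_psi(x) = 2^(-n) <psi|W_x|psi>^2 (a real number since W_x is Hermitian).\<close>
definition p_dist :: "nat \<Rightarrow> ((nat \<Rightarrow> bool) \<Rightarrow> complex) \<Rightarrow> (nat \<Rightarrow> bool) \<times> (nat \<Rightarrow> bool) \<Rightarrow> real" where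
  "p_dist n psi x = Re ((braket n psi (weyl_op n x psi)) ^ 2) / 2 ^ n"

definition q_dist :: "nat \<Rightarrow> ((nat \<Rightarrow> bool) \<Rightarrow> complex) \<Rightarrow> (nat \<Rightarrow> bool) \<times> (nat \<Rightarrow> bool) \<Rightarrow> real" where
  "q_dist n psi x = (\<Sum>y\<in>pts n. p_dist n psi y * p_dist n psi (addp x y))"

definition stab_fidelity :: "nat \<Rightarrow> ((nat \<Rightarrow> bool) \<Rightarrow> complex) \<Rightarrow> real" where
  "stab_fidelity n psi = (SUP phi\<in>{phi. is_stabilizer n phi}. (cmod (braket n phi psi))\<^sup>2)"

definition ket0 :: "(nat \<Rightarrow> bool) \<Rightarrow> complex" where
  "ket0 = (\<lambda>z. if z = zerov then 1 else 0)"

end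

theory Submission
  imports Defs
begin

definition e0 :: "nat \<Rightarrow> bool" where "e0 = (\<lambda>i. i = 0)"

lemma finite_bitvecs: "finite (bitvecs n)"
proof -
  have "bitvecs n \<subseteq> (\<lambda>S i. i \<in> S) ` Pow {..<n}"
  proof
    fix c assume "c \<in> bitvecs n"
    then have "c = (\<lambda>i. i \<in> {i. c i})" "{i. c i} \<in> Pow {..<n}"
      by (auto simp: bitvecs_def not_le[symmetric])
    then show "c \<in> (\<lambda>S i. i \<in> S) ` Pow {..<n}" by blast
  qed
  then show ?thesis by (rule finite_subset) auto
qed

lemma card_bitvecs: "card (bitvecs n) = 2 ^ n"
proof -
  have "bij_betw (\<lambda>c. {i. c i}) (bitvecs n) (Pow {..<n})"
  proof (rule bij_betw_byWitness[where f' = "\<lambda>S i. i \<in> S"])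
    show "\<forall>a\<in>bitvecs n. (\<lambda>i. i \<in> {i. a i}) = a" by auto
    show "\<forall>a'\<in>Pow {..<n}. {i. i \<in> a'} = a'" by auto
    show "(\<lambda>c. {i. c i}) ` bitvecs n \<subseteq> Pow {..<n}"
      by (auto simp: bitvecs_def not_le[symmetric])
    show "(\<lambda>S i. i \<in> S) ` Pow {..<n} \<subseteq> bitvecs n"
      by (auto simp: bitvecs_def)
  qed
  then have "card (bitvecs n) = card (Pow {..<n::nat})" by (rule bij_betw_same_card)
  then show ?thesis by (simp add: card_Pow)
qed

lemma xorv_bitvecs: "a \<in> bitvecs n \<Longrightarrow> b \<in> bitvecs n \<Longrightarrow> xorv a b \<in> bitvecs n"
  by (auto simp: bitvecs_def xorv_def)

lemma xorv_xorv[simp]: "xorv (xorv w a) a = w"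
  by (auto simp: xorv_def)

lemma xorv_zero[simp]: "xorv w zerov = w" "xorv zerov w = w" "xorv w w = zerov"
  by (auto simp: xorv_def zerov_def)

lemma dotn_comm: "dotn n a b = dotn n b a"
  unfolding dotn_def by (metis (mono_tags, lifting) Collect_cong)

lemma dotn_zero[simp]: "dotn n a zerov = 0" "dotn n zerov a = 0"
  by (auto simp: dotn_def zerov_def)

lemma dotn_e0: "n \<ge> 1 \<Longrightarrow> dotn n b e0 = (if b 0 then 1 else 0)"
proof -
  assume "n \<ge> 1"
  have "{i. i < n \<and> b i \<and> e0 i} = (if b 0 then {0} else {})"
    using \<open>n \<ge> 1\<close> by (auto simp: e0_def)
  then show ?thesis by (simp add: dotn_def)
qed

lemma e0_bitvecs: "n \<ge> 1 \<Longrightarrow> e0 \<in> bitvecs n"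
  by (auto simp: bitvecs_def e0_def)

lemma zerov_bitvecs[simp]: "zerov \<in> bitvecs n"
  by (auto simp: bitvecs_def zerov_def)

lemma dotn_xor_parity:
  "((-1::'a::comm_ring_1) ^ dotn n b (xorv w a)) = (-1) ^ dotn n b w * (-1) ^ dotn n b a"
proof -
  define A where "A = {i. i < n \<and> b i \<and> w i}"
  define C where "C = {i. i < n \<and> b i \<and> a i}"
  have D: "{i. i < n \<and> b i \<and> xorv w a i} = (A - C) \<union> (C - A)"
    by (auto simp: A_def C_def xorv_def)
  have fA: "finite A" and fC: "finite C" by (auto simp: A_def C_def)
  have c1: "card A = card (A - C) + card (A \<inter> C)"
  proof -
    have "A = (A - C) \<union> (A \<inter> C)" by blast
    then have "card A = card ((A - C) \<union> (A \<inter> C))" by simp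
    also have "\<dots> = card (A - C) + card (A \<inter> C)" using fA by (intro card_Un_disjoint) auto
    finally show ?thesis .
  qed
  have c2: "card C = card (C - A) + card (A \<inter> C)"
  proof -
    have "C = (C - A) \<union> (A \<inter> C)" by blast
    then have "card C = card ((C - A) \<union> (A \<inter> C))" by simp
    also have "\<dots> = card (C - A) + card (A \<inter> C)" using fC by (intro card_Un_disjoint) auto
    finally show ?thesis .
  qed
  have c3: "card ((A - C) \<union> (C - A)) = card (A - C) + card (C - A)"
    using fA fC by (intro card_Un_disjoint) auto
  have "dotn n b w + dotn n b a = dotn n b (xorv w a) + 2 * card (A \<inter> C)"
    unfolding dotn_def D A_def[symmetric] C_def[symmetric] using c1 c2 c3 by simp
  then have "(-1::'a) ^ (dotn n b w + dotn n b a) = (-1) ^ (dotn n b (xorv w a) + 2 * card (A \<inter> C))"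
    by simp
  then show ?thesis by (simp add: power_add power_mult)
qed

lemma sum_xor_shift:
  assumes "\<And>w. w \<in> A \<Longrightarrow> xorv w a \<in> A"
  shows "sum f A = sum (\<lambda>w. f (xorv w a)) A"
  by (rule sum.reindex_bij_witness[of A "\<lambda>w. xorv w a" "\<lambda>w. xorv w a"]) (auto simp: assms)

lemma braket_weyl_real:
  assumes x: "x \<in> pts n"
  shows "cnj (braket n psi (weyl_op n x psi)) = braket n psi (weyl_op n x psi)"
proof -
  obtain a b where xab: "x = (a, b)" by (cases x)
  have a: "a \<in> bitvecs n" and b: "b \<in> bitvecs n" using x xab by (auto simp: pts_def)
  define d where "d = dotn n a b"
  define sg where "sg = (\<lambda>v. (-1::complex) ^ dotn n b v)"
  have sgx: "sg (xorv w a) = sg w * (-1) ^ d" for w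
    unfolding sg_def d_def by (simp add: dotn_xor_parity dotn_comm)
  have B: "braket n psi (weyl_op n x psi) = (\<Sum>w\<in>bitvecs n. cnj (psi w) * (\<i> ^ d * sg (xorv w a) * psi (xorv w a)))"
    by (simp add: braket_def weyl_op_def xab d_def sg_def)
  have "cnj (braket n psi (weyl_op n x psi)) = (\<Sum>w\<in>bitvecs n. psi w * ((-\<i>) ^ d * sg (xorv w a) * cnj (psi (xorv w a))))"
    unfolding B by (simp add: sg_def)
  also have "\<dots> = (\<Sum>w\<in>bitvecs n. psi (xorv w a) * ((-\<i>) ^ d * sg (xorv (xorv w a) a) * cnj (psi (xorv (xorv w a) a))))"
    by (rule sum_xor_shift) (simp add: xorv_bitvecs a)
  also have "\<dots> = (\<Sum>w\<in>bitvecs n. cnj (psi w) * (\<i> ^ d * sg (xorv w a) * psi (xorv w a)))"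
  proof (rule sum.cong[OF refl])
    fix w
    have "(-\<i>) ^ d = \<i> ^ d * (-1) ^ d" by (simp add: power_mult_distrib[symmetric])
    moreover have "((-1::complex) ^ d) * (-1) ^ d = 1" by (simp add: power_mult_distrib[symmetric])
    ultimately show "psi (xorv w a) * ((-\<i>) ^ d * sg (xorv (xorv w a) a) * cnj (psi (xorv (xorv w a) a))) =
         cnj (psi w) * (\<i> ^ d * sg (xorv w a) * psi (xorv w a))"
      by (simp add: sgx mult_ac)
  qed
  finally show ?thesis using B by simp
qed

lemma p_dist_nonneg:
  assumes "x \<in> pts n"
  shows "p_dist n psi x \<ge> 0"
proof -
  define B where "B = braket n psi (weyl_op n x psi)"
  have "cnj B = B" using braket_weyl_real[OF assms] by (simp add: B_def)
  then have "Im B = 0" by (metis complex_cnj_cancel_iff Reals_cnj_iff complex_is_Real_iff)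
  then have "Re (B ^ 2) = (Re B) ^ 2" by (simp add: power2_eq_square)
  then show ?thesis by (simp add: p_dist_def B_def[symmetric])
qed

lemma addp_pts: "x \<in> pts n \<Longrightarrow> y \<in> pts n \<Longrightarrow> addp x y \<in> pts n"
  by (auto simp: pts_def addp_def xorv_bitvecs)

lemma cs_sum:
  fixes f :: "'a \<Rightarrow> real"
  assumes "finite A"
  shows "(sum f A)^2 \<le> real (card A) * (\<Sum>c\<in>A. (f c)^2)"
proof -
  have "0 \<le> (\<Sum>c\<in>A. \<Sum>d\<in>A. (f c - f d)^2)" by (intro sum_nonneg) auto
  also have "\<dots> = (\<Sum>c\<in>A. \<Sum>d\<in>A. (f c)^2 + (f d)^2 - 2 * (f c * f d))"
    by (simp add: power2_diff mult.assoc)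
  also have "\<dots> = (\<Sum>c\<in>A. real (card A) * (f c)^2 + (\<Sum>d\<in>A. (f d)^2) - 2 * f c * sum f A)"
    by (rule sum.cong[OF refl]) (simp add: sum.distrib sum_subtractf sum_distrib_left mult.assoc)
  also have "\<dots> = 2 * (real (card A) * (\<Sum>c\<in>A. (f c)^2)) - 2 * (sum f A)^2"
    by (simp add: sum.distrib sum_subtractf sum_distrib_left[symmetric] sum_distrib_right[symmetric] power2_eq_square)
  finally show ?thesis by simp
qed

definition Bk :: "nat \<Rightarrow> bool \<Rightarrow> (nat \<Rightarrow> bool) set" where
  "Bk n k = {c \<in> bitvecs n. c 0 = k}"

lemma e0_ne_zero[simp]: "e0 \<noteq> zerov" "zerov \<noteq> e0"
  by (auto simp: e0_def zerov_def fun_eq_iff)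

lemma finite_Bk: "finite (Bk n k)"
  using finite_bitvecs by (auto simp: Bk_def)

lemma xorv_e0_0: "xorv c e0 0 = (\<not> c 0)"
  by (simp add: xorv_def e0_def)

lemma card_Bk:
  assumes n: "n \<ge> 1"
  shows "2 * card (Bk n k) = 2 ^ n"
proof -
  have e: "e0 \<in> bitvecs n" using e0_bitvecs[OF n] .
  have img: "Bk n True = (\<lambda>c. xorv c e0) ` Bk n False"
  proof (rule set_eqI, rule iffI)
    fix c assume c: "c \<in> Bk n True"
    then have "xorv c e0 \<in> Bk n False"
      using e by (simp add: Bk_def xorv_bitvecs xorv_e0_0)
    moreover have "c = xorv (xorv c e0) e0" by simp
    ultimately show "c \<in> (\<lambda>c. xorv c e0) ` Bk n False" by blast
  next
    fix c assume "c \<in> (\<lambda>c. xorv c e0) ` Bk n False"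
    then obtain d where "d \<in> Bk n False" "c = xorv d e0" by blast
    then show "c \<in> Bk n True"
      using e by (simp add: Bk_def xorv_bitvecs xorv_e0_0)
  qed
  have "inj_on (\<lambda>c. xorv c e0) (Bk n False)"
    by (rule inj_on_inverseI[where g="\<lambda>c. xorv c e0"]) simp
  then have c1: "card (Bk n True) = card (Bk n False)" by (simp add: img card_image)
  have un: "bitvecs n = Bk n True \<union> Bk n False" by (auto simp: Bk_def)
  have dis: "Bk n True \<inter> Bk n False = {}" by (auto simp: Bk_def)
  have "card (bitvecs n) = card (Bk n True) + card (Bk n False)"
    unfolding un by (rule card_Un_disjoint[OF finite_Bk finite_Bk dis])
  then have "2 * card (Bk n True) = 2 ^ n" "2 * card (Bk n False) = 2 ^ n"
    using c1 card_bitvecs[of n] by simp_all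
  then show ?thesis by (cases k) simp_all
qed

lemma char_sum_Bk:
  assumes n: "n \<ge> 1" and z: "z \<in> bitvecs n"
  shows "(\<Sum>c\<in>Bk n k. (-1::real) ^ dotn n c z) =
     (if z = zerov then real (card (Bk n k)) else if z = e0 then (if k then - real (card (Bk n k)) else real (card (Bk n k))) else 0)"
proof (cases "z = zerov")
  case True then show ?thesis by simp
next
  case nz: False
  show ?thesis
  proof (cases "z = e0")
    case True
    have "(\<Sum>c\<in>Bk n k. (-1::real) ^ dotn n c z) = (\<Sum>c\<in>Bk n k. (if k then -1 else 1))"
      by (rule sum.cong[OF refl]) (auto simp: True dotn_e0[OF n] Bk_def)
    then show ?thesis using True by simp
  next
    case ne: False
    obtain j where j: "z j" "j \<noteq> 0"
    proof -
      have "\<exists>j. z j \<and> j \<noteq> 0"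
      proof (rule ccontr)
        assume "\<not> ?thesis"
        then have "\<forall>j. z j \<longrightarrow> j = 0" by blast
        then have "z = zerov \<or> z = e0" by (cases "z 0") (auto simp: fun_eq_iff zerov_def e0_def)
        then show False using nz ne by blast
      qed
      then show ?thesis using that by blast
    qed
    have jn: "j < n"
    proof (rule ccontr)
      assume "\<not> j < n"
      then have "\<not> z j" using z by (simp add: bitvecs_def)
      then show False using j by simp
    qed
    define ej where "ej = (\<lambda>i. i = j)"
    have ejb: "ej \<in> bitvecs n" using jn by (auto simp: ej_def bitvecs_def)
    have dj: "dotn n z ej = 1"
    proof -
      have "{i. i < n \<and> z i \<and> ej i} = {j}" using jn j by (auto simp: ej_def)
      then show ?thesis by (simp add: dotn_def)
    qed
    define S where "S = (\<Sum>c\<in>Bk n k. (-1::real) ^ dotn n c z)"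
    have "S = (\<Sum>c\<in>Bk n k. (-1::real) ^ dotn n (xorv c ej) z)"
      unfolding S_def
    proof (rule sum_xor_shift)
      fix c assume c: "c \<in> Bk n k"
      have "xorv c ej \<in> bitvecs n" using c ejb by (simp add: Bk_def xorv_bitvecs)
      moreover have "xorv c ej 0 = c 0" using j by (simp add: xorv_def ej_def)
      ultimately show "xorv c ej \<in> Bk n k" using c by (simp add: Bk_def)
    qed
    also have "\<dots> = - S"
      unfolding S_def sum_negf[symmetric]
    proof (rule sum.cong[OF refl])
      fix c
      have "(-1::real) ^ dotn n (xorv c ej) z = (-1) ^ dotn n z (xorv c ej)" by (simp only: dotn_comm)
      also have "\<dots> = (-1) ^ dotn n z c * (-1) ^ dotn n z ej" by (rule dotn_xor_parity)
      also have "\<dots> = - ((-1) ^ dotn n c z)" by (simp add: dj dotn_comm[of n z c])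
      finally show "(-1::real) ^ dotn n (xorv c ej) z = - ((-1) ^ dotn n c z)" .
    qed
    finally have "S = 0" by simp
    then show ?thesis using nz ne by (simp add: S_def)
  qed
qed

definition Pm :: "((nat \<Rightarrow> bool) \<Rightarrow> complex) \<Rightarrow> (nat \<Rightarrow> bool) \<Rightarrow> real" where
  "Pm psi z = (cmod (psi z))^2"

definition Pt :: "nat \<Rightarrow> ((nat \<Rightarrow> bool) \<Rightarrow> complex) \<Rightarrow> (nat \<Rightarrow> bool) \<Rightarrow> real" where
  "Pt n psi c = (\<Sum>z\<in>bitvecs n. (-1) ^ dotn n c z * Pm psi z)"

lemma p_zero:
  "p_dist n psi (zerov, c) = (Pt n psi c)^2 / 2 ^ n"
proof -
  have h: "cnj (psi z) * ((- 1) ^ m * psi z) = complex_of_real ((- 1) ^ m * (cmod (psi z))\<^sup>2)" for z m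
  proof -
    have "cnj (psi z) * psi z = (of_real (cmod (psi z)))^2"
      by (metis complex_norm_square of_real_power mult.commute)
    then show ?thesis by (simp add: mult.left_commute)
  qed
  have "braket n psi (weyl_op n (zerov, c) psi) = (\<Sum>z\<in>bitvecs n. complex_of_real ((- 1) ^ dotn n c z * Pm psi z))"
    unfolding braket_def weyl_op_def Pm_def by (simp add: h)
  then have "braket n psi (weyl_op n (zerov, c) psi) = of_real (Pt n psi c)"
    by (simp add: Pt_def)
  then show ?thesis by (simp add: p_dist_def)
qed

lemma sum_two_points:
  assumes n: "n \<ge> 1"
  shows "(\<Sum>z\<in>bitvecs n. (if z = zerov then f z else if z = e0 then g z else 0)) = f zerov + (g e0 :: real)"
proof -
  have "(\<Sum>z\<in>bitvecs n. (if z = zerov then f z else if z = e0 then g z else 0)) =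
        (\<Sum>z\<in>{zerov, e0}. (if z = zerov then f z else if z = e0 then g z else 0))"
    by (rule sum.mono_neutral_right) (auto simp: finite_bitvecs e0_bitvecs[OF n])
  then show ?thesis by simp
qed

lemma sum_Pt_Bk:
  assumes n: "n \<ge> 1"
  shows "(\<Sum>c\<in>Bk n k. Pt n psi c) = real (card (Bk n k)) * (Pm psi zerov + (if k then -1 else 1) * Pm psi e0)"
proof -
  have "(\<Sum>c\<in>Bk n k. Pt n psi c) = (\<Sum>z\<in>bitvecs n. Pm psi z * (\<Sum>c\<in>Bk n k. (-1) ^ dotn n c z))"
    unfolding Pt_def by (subst sum.swap) (simp add: sum_distrib_left mult_ac)
  also have "\<dots> = (\<Sum>z\<in>bitvecs n. (if z = zerov then Pm psi z * real (card (Bk n k)) else if z = e0 then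
      Pm psi z * (if k then - real (card (Bk n k)) else real (card (Bk n k))) else 0))"
    by (rule sum.cong[OF refl]) (simp add: char_sum_Bk[OF n])
  also have "\<dots> = real (card (Bk n k)) * (Pm psi zerov + (if k then -1 else 1) * Pm psi e0)"
    by (subst sum_two_points[OF n]) (auto simp: algebra_simps)
  finally show ?thesis .
qed

lemma G_bound:
  assumes n: "n \<ge> 1"
  shows "(\<Sum>c\<in>Bk n k. p_dist n psi (zerov, c)) \<ge> (Pm psi zerov + (if k then -1 else 1) * Pm psi e0)^2 / 2"
proof -
  define N where "N = real (card (Bk n k))"
  define m where "m = Pm psi zerov + (if k then -1 else 1) * Pm psi e0"
  have N2: "2 * N = 2 ^ n" unfolding N_def using card_Bk[OF n, of k]
    by (metis of_nat_mult of_nat_numeral of_nat_power)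
  have Npos: "N > 0" using N2 by (smt (verit) zero_less_power)
  have "(N * m)^2 \<le> N * (\<Sum>c\<in>Bk n k. (Pt n psi c)^2)"
    using cs_sum[where A="Bk n k" and f="Pt n psi"] finite_Bk[of n k] sum_Pt_Bk[OF n, where k=k and psi=psi] by (simp add: N_def m_def)
  then have "N * m^2 \<le> (\<Sum>c\<in>Bk n k. (Pt n psi c)^2)"
    using Npos by (simp add: power2_eq_square mult_ac)
  then have "N * m^2 / 2^n \<le> (\<Sum>c\<in>Bk n k. (Pt n psi c)^2) / 2^n"
    by (simp add: divide_right_mono)
  moreover have "N * m^2 / 2^n = m^2 / 2" using N2 by (simp add: field_simps)
  moreover have "(\<Sum>c\<in>Bk n k. p_dist n psi (zerov, c)) = (\<Sum>c\<in>Bk n k. (Pt n psi c)^2) / 2^n"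
    by (simp add: p_zero sum_divide_distrib)
  ultimately have "m^2 / 2 \<le> (\<Sum>c\<in>Bk n k. p_dist n psi (zerov, c))" by linarith
  then show ?thesis by (simp add: m_def)
qed

definition phiw :: "complex \<Rightarrow> (nat \<Rightarrow> bool) \<Rightarrow> complex" where
  "phiw om w = (if w = zerov then complex_of_real (1 / sqrt 2)
     else if w = e0 then om * complex_of_real (1 / sqrt 2) else 0)"

lemma sum_two_points_c:
  assumes n: "n \<ge> 1"
  shows "(\<Sum>z\<in>bitvecs n. (if z = zerov then f z else if z = e0 then g z else 0)) = f zerov + (g e0 :: 'a::comm_monoid_add)"
proof -
  have "(\<Sum>z\<in>bitvecs n. (if z = zerov then f z else if z = e0 then g z else 0)) =
        (\<Sum>z\<in>{zerov, e0}. (if z = zerov then f z else if z = e0 then g z else 0))"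
    by (rule sum.mono_neutral_right) (auto simp: finite_bitvecs e0_bitvecs[OF n])
  then show ?thesis by simp
qed

lemma r2: "complex_of_real (1 / sqrt 2) * complex_of_real (1 / sqrt 2) = 1/2"
proof -
  have "complex_of_real (1 / sqrt 2) * complex_of_real (1 / sqrt 2) = complex_of_real (1 / sqrt 2 * (1 / sqrt 2))"
    by (simp only: of_real_mult)
  also have "1 / sqrt 2 * (1 / sqrt 2) = (1 / 2 :: real)" by simp
  finally show ?thesis by simp
qed

lemma sqrt2c[simp]: "complex_of_real (sqrt 2) * complex_of_real (sqrt 2) = 2"
proof -
  have "complex_of_real (sqrt 2) * complex_of_real (sqrt 2) = complex_of_real (sqrt 2 * sqrt 2)"
    by (simp only: of_real_mult)
  then show ?thesis by simp
qed

lemma i_facts: "\<i> \<noteq> 1" "\<i> \<noteq> -1" "-\<i> \<noteq> 1" "-\<i> \<noteq> -1" "(1::complex) \<noteq> \<i>" "(1::complex) \<noteq> -\<i>"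
  "(-1::complex) \<noteq> \<i>" "(-1::complex) \<noteq> -\<i>"
  by (simp_all add: complex_eq_iff)

lemma sgn_sol: "s = 1 \<or> s = -1 \<Longrightarrow> c = s * om \<Longrightarrow> om = c \<or> om = - (c::complex)"
  by (elim disjE) simp_all

lemma phiw_state:
  assumes n: "n \<ge> 1" and om: "om = 1 \<or> om = -1 \<or> om = \<i> \<or> om = -\<i>"
  shows "is_state n (phiw om)"
proof -
  have "braket n (phiw om) (phiw om) = (\<Sum>z\<in>bitvecs n. (if z = zerov then complex_of_real (1 / sqrt 2) * complex_of_real (1 / sqrt 2)
      else if z = e0 then (cnj om * om) * (complex_of_real (1 / sqrt 2) * complex_of_real (1 / sqrt 2)) else 0))"
    unfolding braket_def phiw_def by (rule sum.cong[OF refl]) (auto simp: mult_ac)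
  also have "\<dots> = 1"
    by (subst sum_two_points_c[OF n]) (use om in \<open>auto simp: r2\<close>)
  finally show ?thesis by (simp add: is_state_def)
qed

lemma phiw_Weyl:
  assumes n: "n \<ge> 1" and om: "om = 1 \<or> om = -1 \<or> om = \<i> \<or> om = -\<i>"
  shows "Weyl n (phiw om) = (\<lambda>b. (zerov, b)) ` Bk n False \<union> (\<lambda>b. (e0, b)) ` Bk n (om = \<i> \<or> om = -\<i>)"
    (is "_ = ?W")
proof
  define r where "r = complex_of_real (1 / sqrt 2)"
  have r0: "r \<noteq> 0" by (simp add: r_def)
  have om0: "om \<noteq> 0" using om by auto
  have phi: "phiw om w = (if w = zerov then r else if w = e0 then om * r else 0)" for w
    by (simp add: phiw_def r_def)
  show "Weyl n (phiw om) \<subseteq> ?W"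
  proof
    fix x assume x: "x \<in> Weyl n (phiw om)"
    obtain a b where xab: "x = (a, b)" by (cases x)
    have ab: "a \<in> bitvecs n" "b \<in> bitvecs n" using x xab by (auto simp: Weyl_def pts_def)
    have disj: "(\<forall>w\<in>bitvecs n. weyl_op n (a, b) (phiw om) w = phiw om w) \<or>
        (\<forall>w\<in>bitvecs n. weyl_op n (a, b) (phiw om) w = - phiw om w)"
      using x xab by (simp add: Weyl_def)
    obtain s :: complex where s: "s = 1 \<or> s = -1" and W: "\<And>w. w \<in> bitvecs n \<Longrightarrow> weyl_op n (a, b) (phiw om) w = s * phiw om w"
    proof -
      from disj show ?thesis
      proof
        assume h: "\<forall>w\<in>bitvecs n. weyl_op n (a, b) (phiw om) w = phiw om w"
        show ?thesis by (rule that[of 1]) (use h in simp_all)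
      next
        assume h: "\<forall>w\<in>bitvecs n. weyl_op n (a, b) (phiw om) w = - phiw om w"
        show ?thesis by (rule that[of "-1"]) (use h in simp_all)
      qed
    qed
    have Wd: "weyl_op n (a, b) (phiw om) w = \<i> ^ dotn n a b * (-1) ^ dotn n b (xorv w a) * phiw om (xorv w a)" for w
      by (simp add: weyl_op_def)
    have "a = zerov \<or> a = e0"
    proof (rule ccontr)
      assume na: "\<not> (a = zerov \<or> a = e0)"
      have "weyl_op n (a, b) (phiw om) a = \<i> ^ dotn n a b * r" by (simp add: Wd phi)
      moreover have "weyl_op n (a, b) (phiw om) a = 0" using W[OF ab(1)] na by (simp add: phi)
      ultimately show False using r0 by simp
    qed
    then show "x \<in> ?W"
    proof
      assume a: "a = zerov"
      have "s * r = r" using W[OF zerov_bitvecs] by (simp add: weyl_op_def phi a)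
      then have s1: "s = 1" using r0 by simp
      have "(-1) ^ dotn n b e0 * (om * r) = om * r" using W[OF e0_bitvecs[OF n]] by (simp add: weyl_op_def phi a s1)
      then have "(-1::complex) ^ dotn n b e0 = 1" using r0 om0 by simp
      then have "\<not> b 0" by (auto simp: dotn_e0[OF n] split: if_splits)
      then show "x \<in> ?W" using ab by (auto simp: xab a Bk_def)
    next
      assume a: "a = e0"
      have xe: "xorv e0 e0 = zerov" by simp
      have "\<i> ^ dotn n e0 b * r = s * (om * r)" using W[OF e0_bitvecs[OF n]] by (simp add: weyl_op_def phi a)
      then have "\<i> ^ dotn n e0 b = s * om" using r0 by (metis mult.assoc mult_cancel_right)
      moreover have "dotn n e0 b = (if b 0 then 1 else 0)" by (simp add: dotn_comm[of n e0 b] dotn_e0[OF n])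
      ultimately have h: "(if b 0 then \<i> else 1) = s * om" by (cases "b 0") simp_all
      have "b 0 = (om = \<i> \<or> om = -\<i>)"
      proof (cases "b 0")
        case True
        then have "\<i> = s * om" using h by simp
        then have "om = \<i> \<or> om = -\<i>" using sgn_sol[OF s] by blast
        then show ?thesis using True by simp
      next
        case False
        then have "1 = s * om" using h by simp
        then have "om = 1 \<or> om = -1" using sgn_sol[OF s] by blast
        then show ?thesis using False i_facts by auto
      qed
      then show "x \<in> ?W" using ab by (auto simp: xab a Bk_def)
    qed
  qed
  show "?W \<subseteq> Weyl n (phiw om)"
  proof
    fix x assume "x \<in> ?W"
    then consider (Z) b where "x = (zerov, b)" "b \<in> Bk n False" | (E) b where "x = (e0, b)" "b \<in> Bk n (om = \<i> \<or> om = -\<i>)"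
      by blast
    then show "x \<in> Weyl n (phiw om)"
    proof cases
      case Z
      have "weyl_op n x (phiw om) w = phiw om w" if "w \<in> bitvecs n" for w
        using Z by (auto simp: weyl_op_def phi dotn_e0[OF n] Bk_def)
      then show ?thesis using Z e0_bitvecs[OF n] by (auto simp: Weyl_def pts_def Bk_def)
    next
      case E
      have b: "b \<in> bitvecs n" using E by (simp add: Bk_def)
      have d: "dotn n e0 b = (if om = \<i> \<or> om = -\<i> then 1 else 0)" "dotn n b e0 = (if om = \<i> \<or> om = -\<i> then 1 else 0)"
        using E by (auto simp: dotn_comm[of n e0 b] dotn_e0[OF n] Bk_def)
      define s where "s = (if om = 1 \<or> om = \<i> then (1::complex) else -1)"
      have xor1: "xorv w e0 = zerov \<longleftrightarrow> w = e0" for w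
        by (metis xorv_xorv xorv_zero(2) xorv_zero(3))
      have xor2: "xorv w e0 = e0 \<longleftrightarrow> w = zerov" for w
        by (metis xorv_xorv xorv_zero(2) xorv_zero(3))
      have W: "weyl_op n x (phiw om) w = s * phiw om w" for w
      proof -
        have "weyl_op n x (phiw om) w = \<i> ^ dotn n e0 b * (-1) ^ dotn n b (xorv w e0) * phiw om (xorv w e0)"
          using E by (simp add: weyl_op_def)
        also have "\<dots> = s * phiw om w"
        proof (cases "w = zerov \<or> w = e0")
          case True
          then show ?thesis
          proof
            assume w: "w = zerov"
            have "\<i> ^ dotn n e0 b * (-1) ^ dotn n b e0 * phiw om e0 = s * phiw om zerov"
              unfolding phi d s_def using om by (elim disjE) (simp_all add: i_facts)
            then show ?thesis unfolding w by simp
          next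
            assume w: "w = e0"
            have "\<i> ^ dotn n e0 b * (-1) ^ dotn n b zerov * phiw om zerov = s * phiw om e0"
              unfolding phi d s_def using om by (elim disjE) (simp_all add: i_facts)
            then show ?thesis unfolding w by simp
          qed
        next
          case False
          then show ?thesis by (simp add: phi xor1 xor2)
        qed
        finally show ?thesis .
      qed
      have "x \<in> pts n" using E b e0_bitvecs[OF n] by (simp add: pts_def)
      show ?thesis
      proof (cases "om = 1 \<or> om = \<i>")
        case True
        then have "s = 1" by (simp add: s_def)
        then have "\<forall>w\<in>bitvecs n. weyl_op n x (phiw om) w = phiw om w" using W by simp
        then show ?thesis using \<open>x \<in> pts n\<close> by (simp add: Weyl_def)
      next
        case False
        then have "s = -1" by (simp add: s_def)
        then have "\<forall>w\<in>bitvecs n. weyl_op n x (phiw om) w = - phiw om w" using W by simp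
        then show ?thesis using \<open>x \<in> pts n\<close> by (simp add: Weyl_def)
      qed
    qed
  qed
qed

lemma phiw_stab:
  assumes n: "n \<ge> 1" and om: "om = 1 \<or> om = -1 \<or> om = \<i> \<or> om = -\<i>"
  shows "is_stabilizer n (phiw om)"
proof -
  let ?k = "om = \<i> \<or> om = -\<i>"
  have i1: "inj_on (\<lambda>b. (zerov, b)) (Bk n False)" by (auto simp: inj_on_def)
  have i2: "inj_on (\<lambda>b. (e0, b)) (Bk n ?k)" by (auto simp: inj_on_def)
  have "card (Weyl n (phiw om)) = card ((\<lambda>b. (zerov, b)) ` Bk n False) + card ((\<lambda>b. (e0, b)) ` Bk n ?k)"
    unfolding phiw_Weyl[OF n om] by (rule card_Un_disjoint) (auto simp: finite_Bk)
  also have "\<dots> = card (Bk n False) + card (Bk n ?k)" by (simp add: card_image i1 i2)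
  also have "\<dots> = 2 ^ n" using card_Bk[OF n, of False] card_Bk[OF n, of ?k] by simp
  finally show ?thesis using phiw_state[OF n om] by (simp add: is_stabilizer_def)
qed

lemma braket_phiw:
  assumes n: "n \<ge> 1"
  shows "braket n (phiw om) psi = complex_of_real (1 / sqrt 2) * (psi zerov + cnj om * psi e0)"
proof -
  have "braket n (phiw om) psi = (\<Sum>z\<in>bitvecs n. (if z = zerov then complex_of_real (1 / sqrt 2) * psi z
      else if z = e0 then complex_of_real (1 / sqrt 2) * cnj om * psi z else 0))"
    unfolding braket_def phiw_def by (rule sum.cong[OF refl]) (auto simp: mult_ac)
  also have "\<dots> = complex_of_real (1 / sqrt 2) * (psi zerov + cnj om * psi e0)"
    by (subst sum_two_points_c[OF n]) (simp add: algebra_simps)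
  finally show ?thesis .
qed

lemma fid_phiw:
  assumes n: "n \<ge> 1"
  shows "(cmod (braket n (phiw om) psi))^2 = (cmod (psi zerov + cnj om * psi e0))^2 / 2"
  by (simp add: braket_phiw[OF n] norm_mult norm_divide power_divide)

lemma cmod_sq: "(cmod z)^2 = (Re z)^2 + (Im z)^2"
  by (simp add: cmod_power2)

lemma final_ineq:
  fixes al be :: complex
  assumes h: "\<And>om. om = 1 \<or> om = -1 \<or> om = \<i> \<or> om = -\<i> \<Longrightarrow> (cmod (al + cnj om * be))^2 / 2 \<le> (cmod al)^2"
  shows "((cmod al)^2 + (cmod be)^2)^2 / 2 * (((cmod al)^2 - (cmod be)^2)^2 / 2) \<ge> (2 - sqrt 3) / 2 * ((cmod al)^2)^4"
proof -
  define p where "p = Re al"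
  define q where "q = Im al"
  define r where "r = Re be"
  define t where "t = Im be"
  define a where "a = (cmod al)^2"
  define b where "b = (cmod be)^2"
  have a: "a = p^2 + q^2" by (simp add: a_def p_def q_def cmod_sq)
  have b: "b = r^2 + t^2" by (simp add: b_def r_def t_def cmod_sq)
  define X where "X = p * r + q * t"
  define Y where "Y = p * t - q * r"
  have c1: "(p + r)^2 + (q + t)^2 \<le> 2 * a"
    using h[of 1] by (simp add: cmod_sq a_def p_def q_def r_def t_def)
  have c2: "(p - r)^2 + (q - t)^2 \<le> 2 * a"
    using h[of "-1"] by (simp add: cmod_sq a_def p_def q_def r_def t_def)
  have c3: "(p + t)^2 + (q - r)^2 \<le> 2 * a"
    using h[of "\<i>"] by (simp add: cmod_sq a_def p_def q_def r_def t_def)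
  have c4: "(p - t)^2 + (q + r)^2 \<le> 2 * a"
    using h[of "-\<i>"] by (simp add: cmod_sq a_def p_def q_def r_def t_def)
  have X1: "b + 2 * X \<le> a" using c1 unfolding a b X_def by (simp add: power2_eq_square algebra_simps)
  have X2: "b - 2 * X \<le> a" using c2 unfolding a b X_def by (simp add: power2_eq_square algebra_simps)
  have Y1: "b + 2 * Y \<le> a" using c3 unfolding a b Y_def by (simp add: power2_eq_square algebra_simps)
  have Y2: "b - 2 * Y \<le> a" using c4 unfolding a b Y_def by (simp add: power2_eq_square algebra_simps)
  have XY: "X^2 + Y^2 = a * b" unfolding a b X_def Y_def by (simp add: power2_eq_square algebra_simps)
  have a0: "a \<ge> 0" and b0: "b \<ge> 0" by (simp_all add: a_def b_def)
  have aX: "\<bar>2 * X\<bar> \<le> a - b" using X1 X2 by linarith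
  have aY: "\<bar>2 * Y\<bar> \<le> a - b" using Y1 Y2 by linarith
  have ba: "b \<le> a" using aX by linarith
  have "(2 * X)^2 \<le> (a - b)^2"
    using power_mono[OF aX, of 2] by simp
  moreover have "(2 * Y)^2 \<le> (a - b)^2"
    using power_mono[OF aY, of 2] by simp
  ultimately have "4 * (X^2 + Y^2) \<le> 2 * (a - b)^2" by (simp add: power_mult_distrib)
  then have key: "2 * (a * b) \<le> (a - b)^2" using XY by simp
  define s where "s = sqrt 3"
  have s2: "s * s = 3" by (simp add: s_def)
  have s0: "s \<ge> 1" by (simp add: s_def)
  have s1: "s \<le> 2"
  proof -
    have "sqrt 3 \<le> sqrt ((2::real)^2)" by (simp only: real_sqrt_le_iff) simp
    then have "sqrt 3 \<le> \<bar>2::real\<bar>" by (simp only: real_sqrt_abs)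
    then show ?thesis by (simp add: s_def)
  qed
  have bs: "b \<le> (2 - s) * a"
  proof (cases "a = 0")
    case True then show ?thesis using ba b0 by simp
  next
    case False
    then have ap: "a > 0" using a0 by simp
    have "(b - (2 - s) * a) * (b - (2 + s) * a) = b^2 - 4 * a * b + (4 - s * s) * a^2"
      by (simp add: power2_eq_square algebra_simps)
    also have "\<dots> = b^2 - 4 * a * b + a^2" using s2 by simp
    also have "\<dots> \<ge> 0" using key by (simp add: power2_eq_square algebra_simps)
    finally have prod: "(b - (2 - s) * a) * (b - (2 + s) * a) \<ge> 0" .
    have "1 * a < (2 + s) * a" by (rule mult_strict_right_mono) (use s0 ap in auto)
    then have neg: "b - (2 + s) * a < 0" using ba by simp
    show ?thesis
    proof (rule ccontr)
      assume "\<not> ?thesis"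
      then have "b - (2 - s) * a > 0" by simp
      with neg have "(b - (2 - s) * a) * (b - (2 + s) * a) < 0" by (simp add: mult_pos_neg)
      with prod show False by simp
    qed
  qed
  have amb: "(s - 1) * a \<le> a - b" using bs by (simp add: algebra_simps)
  have "((s - 1) * a)^2 \<le> (a - b)^2"
    by (rule power_mono[OF amb]) (use s0 a0 in simp)
  moreover have "((s - 1) * a)^2 = (4 - 2 * s) * a^2"
    by (simp add: power2_eq_square algebra_simps s2)
  ultimately have d1: "(4 - 2 * s) * a^2 \<le> (a - b)^2" by simp
  have d2: "a^2 \<le> (a + b)^2" using a0 b0 by (simp add: power_mono)
  have "a^2 * ((4 - 2 * s) * a^2) \<le> (a + b)^2 * (a - b)^2"
    by (rule mult_mono[OF d2 d1]) (use s1 in simp_all)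
  then have "a^2 * ((4 - 2 * s) * a^2) / 4 \<le> (a + b)^2 * (a - b)^2 / 4"
    by (rule divide_right_mono) simp
  moreover have "a^4 = a^2 * a^2" by (simp flip: power_add)
  then have "(2 - s) / 2 * a^4 = a^2 * ((4 - 2 * s) * a^2) / 4" by (simp add: field_simps)
  moreover have "(a + b)^2 / 2 * ((a - b)^2 / 2) = (a + b)^2 * (a - b)^2 / 4" by simp
  ultimately have "(2 - s) / 2 * a^4 \<le> (a + b)^2 / 2 * ((a - b)^2 / 2)" by simp
  then show ?thesis by (simp add: a_def b_def s_def)
qed

lemma sqrt3_le2: "sqrt 3 \<le> (2::real)"
proof -
  have "sqrt 3 \<le> sqrt ((2::real)^2)" by (simp only: real_sqrt_le_iff) simp
  then have "sqrt 3 \<le> \<bar>2::real\<bar>" by (simp only: real_sqrt_abs)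
  then show ?thesis by simp
qed

lemma braket_ket0: "braket n ket0 psi = psi zerov"
proof -
  have "braket n ket0 psi = (\<Sum>z\<in>bitvecs n. if z = zerov then psi z else 0)"
    unfolding braket_def ket0_def by (rule sum.cong[OF refl]) simp
  also have "\<dots> = psi zerov" by (simp add: finite_bitvecs)
  finally show ?thesis .
qed

lemma finite_pts: "finite (pts n)"
  by (simp add: pts_def finite_bitvecs)

theorem lemma5p5:
  fixes n :: nat and psi :: "(nat \<Rightarrow> bool) \<Rightarrow> complex"
    and Sstar T :: "((nat \<Rightarrow> bool) \<times> (nat \<Rightarrow> bool)) set"
  assumes "n \<ge> 1"
    and "is_state n psi"
    and "\<And>phi. is_stabilizer n phi \<Longrightarrow> (cmod (braket n phi psi))\<^sup>2 \<le> (cmod (braket n ket0 psi))\<^sup>2"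
    and "Sstar = {(a, b). a = zerov \<and> b \<in> bitvecs n}"
    and "T = {(a, b). a = zerov \<and> b \<in> bitvecs n \<and> \<not> b 0}"
  shows "(\<Sum>x\<in>Sstar - T. q_dist n psi x) \<ge> (2 - sqrt 3) / 2 * (stab_fidelity n psi) ^ 4"
proof -
  note n = assms(1)
  define a where "a = Pm psi zerov"
  define b where "b = Pm psi e0"
  define f where "f = (\<lambda>phi. (cmod (braket n phi psi))\<^sup>2)"
  define A where "A = {phi. is_stabilizer n phi}"
  have hyp: "f phi \<le> a" if "phi \<in> A" for phi
    using assms(3)[of phi] that by (simp add: f_def A_def a_def Pm_def braket_ket0)
  have om1: "(1::complex) = 1 \<or> (1::complex) = -1 \<or> (1::complex) = \<i> \<or> (1::complex) = -\<i>" by simp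
  have inA: "phiw 1 \<in> A" using phiw_stab[OF n om1] by (simp add: A_def)
  have bdd: "bdd_above (f ` A)" using hyp by (intro bdd_aboveI2) 
  have Fdef: "stab_fidelity n psi = (SUP phi\<in>A. f phi)" by (simp add: stab_fidelity_def A_def f_def)
  have Fle: "stab_fidelity n psi \<le> a"
    unfolding Fdef using inA hyp by (intro cSUP_least) auto
  have Fge: "0 \<le> stab_fidelity n psi"
  proof -
    have "f (phiw 1) \<le> (SUP phi\<in>A. f phi)" by (rule cSUP_upper[OF inA bdd])
    moreover have "0 \<le> f (phiw 1)" by (simp add: f_def)
    ultimately show ?thesis unfolding Fdef by linarith
  qed
  have F4: "(stab_fidelity n psi) ^ 4 \<le> a ^ 4" by (rule power_mono[OF Fle Fge])
  have cons: "(cmod (psi zerov + cnj om * psi e0))^2 / 2 \<le> (cmod (psi zerov))^2"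
    if om: "om = 1 \<or> om = -1 \<or> om = \<i> \<or> om = -\<i>" for om
  proof -
    have "phiw om \<in> A" using phiw_stab[OF n om] by (simp add: A_def)
    then have "f (phiw om) \<le> a" by (rule hyp)
    then show ?thesis by (simp add: f_def fid_phiw[OF n] a_def Pm_def)
  qed
  have main_ineq: "(2 - sqrt 3) / 2 * a ^ 4 \<le> (a + b)^2 / 2 * ((a - b)^2 / 2)"
    using final_ineq[where al = "psi zerov" and be = "psi e0", OF cons] by (simp add: a_def b_def Pm_def)
  define g where "g = (\<lambda>c. p_dist n psi (zerov, c))"
  define G0 where "G0 = (\<Sum>c\<in>Bk n False. g c)"
  define G1 where "G1 = (\<Sum>c\<in>Bk n True. g c)"
  have G0b: "(a + b)^2 / 2 \<le> G0" using G_bound[OF n, where k=False and psi=psi] by (simp add: G0_def g_def a_def b_def)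
  have G1b: "(a - b)^2 / 2 \<le> G1" using G_bound[OF n, where k=True and psi=psi] by (simp add: G1_def g_def a_def b_def)
  have pnn: "\<And>y. y \<in> pts n \<Longrightarrow> 0 \<le> p_dist n psi y" by (rule p_dist_nonneg)
  have ST: "Sstar - T = (\<lambda>c. (zerov, c)) ` Bk n True"
    unfolding assms(4,5) Bk_def by auto
  have inj1: "inj_on (\<lambda>c. (zerov, c)) X" for X :: "(nat \<Rightarrow> bool) set" by (auto simp: inj_on_def)
  have "(\<Sum>x\<in>Sstar - T. q_dist n psi x) = (\<Sum>c\<in>Bk n True. q_dist n psi (zerov, c))"
    unfolding ST by (simp add: sum.reindex[OF inj1])
  also have "\<dots> \<ge> (\<Sum>c\<in>Bk n True. \<Sum>d\<in>Bk n False. g d * g (xorv c d))"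
  proof (rule sum_mono)
    fix c assume c: "c \<in> Bk n True"
    have cb: "c \<in> bitvecs n" using c by (simp add: Bk_def)
    have sub: "(\<lambda>d. (zerov, d)) ` Bk n False \<subseteq> pts n" by (auto simp: pts_def Bk_def)
    have "(\<Sum>d\<in>Bk n False. g d * g (xorv c d)) =
          (\<Sum>y\<in>(\<lambda>d. (zerov, d)) ` Bk n False. p_dist n psi y * p_dist n psi (addp (zerov, c) y))"
      by (simp add: sum.reindex[OF inj1] g_def addp_def)
    also have "\<dots> \<le> (\<Sum>y\<in>pts n. p_dist n psi y * p_dist n psi (addp (zerov, c) y))"
    proof (rule sum_mono2[OF finite_pts sub])
      fix y assume y: "y \<in> pts n - (\<lambda>d. (zerov, d)) ` Bk n False"
      have "(zerov, c) \<in> pts n" using cb by (simp add: pts_def)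
      then have "addp (zerov, c) y \<in> pts n" using y by (simp add: addp_pts)
      then show "0 \<le> p_dist n psi y * p_dist n psi (addp (zerov, c) y)"
        using y pnn by (simp add: mult_nonneg_nonneg)
    qed
    finally show "(\<Sum>d\<in>Bk n False. g d * g (xorv c d)) \<le> q_dist n psi (zerov, c)"
      by (simp add: q_dist_def)
  qed
  also have "(\<Sum>c\<in>Bk n True. \<Sum>d\<in>Bk n False. g d * g (xorv c d)) = (\<Sum>d\<in>Bk n False. g d * (\<Sum>c\<in>Bk n True. g (xorv c d)))"
    by (subst sum.swap) (simp add: sum_distrib_left)
  also have "\<dots> = (\<Sum>d\<in>Bk n False. g d * G1)"
  proof (rule sum.cong[OF refl])
    fix d assume d: "d \<in> Bk n False"
    have "G1 = (\<Sum>c\<in>Bk n True. g (xorv c d))"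
      unfolding G1_def
    proof (rule sum_xor_shift)
      fix c assume c: "c \<in> Bk n True"
      have "xorv c d \<in> bitvecs n" using c d by (simp add: Bk_def xorv_bitvecs)
      moreover have "xorv c d 0" using c d by (simp add: Bk_def xorv_def)
      ultimately show "xorv c d \<in> Bk n True" by (simp add: Bk_def)
    qed
    then show "g d * (\<Sum>c\<in>Bk n True. g (xorv c d)) = g d * G1" by simp
  qed
  also have "\<dots> = G0 * G1" by (simp add: G0_def sum_distrib_right)
  finally have S: "G0 * G1 \<le> (\<Sum>x\<in>Sstar - T. q_dist n psi x)" .
  have "(a + b)^2 / 2 * ((a - b)^2 / 2) \<le> G0 * G1"
    by (rule mult_mono[OF G0b G1b]) (use G0b in \<open>simp_all\<close>, smt (verit) zero_le_power2)
  have c0: "0 \<le> (2 - sqrt 3) / 2" using sqrt3_le2 by simp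
  have "(2 - sqrt 3) / 2 * (stab_fidelity n psi) ^ 4 \<le> (2 - sqrt 3) / 2 * a ^ 4"
    by (rule mult_left_mono[OF F4 c0])
  also have "\<dots> \<le> (a + b)^2 / 2 * ((a - b)^2 / 2)" by (rule main_ineq)
  also have "\<dots> \<le> G0 * G1" by fact
  also have "\<dots> \<le> (\<Sum>x\<in>Sstar - T. q_dist n psi x)" by (rule S)
  finally show ?thesis .
qed

end
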